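(* Let $\mathcal C$ be a clustering problem satisfying Assumption 1, $P\in\Lambda$ with $p_{\min}=\min_{i\in[K]}\min_{a\in\mathcal X}P_i(a)>0$, and $\sigma'\in\mathcal C\setminus\{\sigma_P\}$. Then for all $\gamma\in(0,1/K)$, $$C_{g_P^{\sigma'}}(\Sigma_K^\gamma)\le\frac D\gamma,\qquad D=\Big(\max_{\sigma''\in\mathcal C}\max_{m\in[M_{\sigma''}]}|\mathcal A_m^{\sigma''}|\Big)\frac{|\mathcal X|(1-p_{\min})}{4p_{\min}}.$$
   Context: Framework. Let $\mathcal X$ be a finite alphabet with $|\mathcal X|\ge2$, $\mathcal P(\mathcal X)$ the set of probability distributions on $\mathcal X$, and $K\ge2$ an integer (number of arms); $[n]=\{1,\dots,n\}$. A hypothesis is a collection $\sigma=\{\mathcal A_1^\sigma,\dots,\mathcal A_{M_\sigma}^\sigma\}$ ($M_\sigma\ge1$) of pairwise disjoint subsets of $[K]$, each of cardinality at least 2 (clusters); let $\mathcal A^\sigma_{M_\sigma+1}=[K]\setminus\bigcup_{m\le M_\sigma}\mathcal A_m^\sigma$. $\Lambda_\sigma$ is the set of $P\in\mathcal P(\mathcal X)^K$ with $P_i=P_j$ whenever $i,j\in\mathcal A_m^\sigma$ for some $m\le M_\sigma$, and $P_i\neq P_j$ whenever $i\in\mathcal A_{m_1}^\sigma$, $j\in\mathcal A_{m_2}^\sigma$ with $m_1\ne m_2\in[M_\sigma+1]$. A clustering problem is a finite set $\mathcal C$ of hypotheses with $|\mathcal C|\ge2$; $\Lambda=\bigcup_{\sigma\in\mathcal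 C}\Lambda_\sigma$. Hypothesis $\sigma$ dominates $\sigma'$ if every cluster of $\sigma$ is a subset of some cluster of $\sigma'$. Assumption 1: (i) there is no pair $\sigma\neq\sigma'$ in $\mathcal C$ such that $\sigma$ dominates $\sigma'$; (ii) every $P\in\Lambda$ belongs to $\Lambda_\sigma$ for exactly one $\sigma\in\mathcal C$, denoted $\sigma_P$. Functions. $D(P\|Q)$ is the KL divergence. $\Sigma_K=\{w\in\mathbb R^K: w_i\ge0,\sum_iw_i=1\}$, $\Sigma_K^\gamma=\{w\in\Sigma_K:w_i\ge\gamma\ \forall i\}$. For $\mathcal A\subseteq[K]$, $G(P_{\mathcal A},w_{\mathcal A})=0$ if $w_i=0$ for all $i\in\mathcal A$, and otherwise $G(P_{\mathcal A},w_{\mathcal A})=\sum_{i\in\mathcal A}w_iD(P_i\|W)$ with $W=\sum_{i\in\mathcal A}w_iP_i/\sum_{i\in\mathcal A}w_i$. For $\sigma\in\mathcal C$, $g_P^\sigma(w)=\sum_{m=1}^{M_\sigma}G(P_{\mathcal A_m^\sigma},w_{\mathcal A_m^\sigma})$ (a concave differentiable function on $\Sigma_K^\gamma$). For a concave differentiable $f$ on a compact convex set $\mathcal A$, the curvature constant is $$C_f(\mathcal A)=\sup_{x,z\in\mathcal A,\ \alpha\in(0,1],\ y=x+\alpha(z-x)}\frac1{\alpha^2}\big(f(x)-f(y)+\langle y-x,\nabla f(x)\rangle\big).$$ *)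

theory Defs
  imports "HOL-Analysis.Analysis"
begin

text \<open>Arms: the finite type 'k (so [K] = UNIV :: 'k set, K = CARD('k)).
  Alphabet: the finite type 'a. Distributions on the alphabet: functions 'a \<Rightarrow> real.\<close>

definition is_distr :: "('a::finite \<Rightarrow> real) \<Rightarrow> bool" where
  "is_distr p \<longleftrightarrow> (\<forall>a. p a \<ge> 0) \<and> (\<Sum>a\<in>UNIV. p a) = 1"

definition KL :: "('a::finite \<Rightarrow> real) \<Rightarrow> ('a \<Rightarrow> real) \<Rightarrow> real" where
  "KL p q = (\<Sum>a\<in>UNIV. if p a = 0 then 0 else p a * ln (p a / q a))"

definition is_hypothesis :: "'k set set \<Rightarrow> bool" where
  "is_hypothesis \<sigma> \<longleftrightarrow> \<sigma> \<noteq> {} \<and>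
     (\<forall>A\<in>\<sigma>. \<forall>B\<in>\<sigma>. A \<noteq> B \<longrightarrow> A \<inter> B = {}) \<and>
     (\<forall>A\<in>\<sigma>. finite A \<and> card A \<ge> 2)"

text \<open>The blocks A_1,...,A_M together with the remainder A_{M+1}.\<close>
definition blocks :: "'k set set \<Rightarrow> 'k set set" where
  "blocks \<sigma> = insert (UNIV - \<Union>\<sigma>) \<sigma>"

definition in_Lambda :: "'k set set \<Rightarrow> ('k \<Rightarrow> 'a::finite \<Rightarrow> real) \<Rightarrow> bool" where
  "in_Lambda \<sigma> P \<longleftrightarrow> (\<forall>i. is_distr (P i)) \<and>
     (\<forall>A\<in>\<sigma>. \<forall>i\<in>A. \<forall>j\<in>A. P i = P j) \<and>
     (\<forall>B1\<in>blocks \<sigma>. \<forall>B2\<in>blocks \<sigma>. B1 \<noteq> B2 \<longrightarrow> (\<forall>i\<in>B1. \<forall>j\<in>B2. P i \<noteq> P j))"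

definition dominates :: "'k set set \<Rightarrow> 'k set set \<Rightarrow> bool" where
  "dominates \<sigma> \<sigma>' \<longleftrightarrow> (\<forall>A\<in>\<sigma>. \<exists>B\<in>\<sigma>'. A \<subseteq> B)"

definition clustering_problem :: "'k set set set \<Rightarrow> bool" where
  "clustering_problem C \<longleftrightarrow> finite C \<and> card C \<ge> 2 \<and> (\<forall>\<sigma>\<in>C. is_hypothesis \<sigma>)"

definition in_Lambda_C :: "'k set set set \<Rightarrow> ('k \<Rightarrow> 'a::finite \<Rightarrow> real) \<Rightarrow> bool" where
  "in_Lambda_C C P \<longleftrightarrow> (\<exists>\<sigma>\<in>C. in_Lambda \<sigma> P)"

definition assumption1 :: "'k set set set \<Rightarrow> ('a::finite) itself \<Rightarrow> bool" where
  "assumption1 C _ \<longleftrightarrow>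
     (\<nexists>\<sigma> \<sigma>'. \<sigma> \<in> C \<and> \<sigma>' \<in> C \<and> \<sigma> \<noteq> \<sigma>' \<and> dominates \<sigma> \<sigma>') \<and>
     (\<forall>P::'k \<Rightarrow> 'a \<Rightarrow> real. in_Lambda_C C P \<longrightarrow> (\<exists>!\<sigma>. \<sigma> \<in> C \<and> in_Lambda \<sigma> P))"

definition sigma_of :: "'k set set set \<Rightarrow> ('k \<Rightarrow> 'a::finite \<Rightarrow> real) \<Rightarrow> 'k set set" where
  "sigma_of C P = (THE \<sigma>. \<sigma> \<in> C \<and> in_Lambda \<sigma> P)"

definition simplex_gamma :: "real \<Rightarrow> (real ^ 'k::finite) set" where
  "simplex_gamma \<gamma> = {w. (\<forall>i. w $ i \<ge> \<gamma>) \<and> (\<Sum>i\<in>UNIV. w $ i) = 1}"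

definition Gfun :: "('k::finite \<Rightarrow> 'a::finite \<Rightarrow> real) \<Rightarrow> 'k set \<Rightarrow> real ^ 'k \<Rightarrow> real" where
  "Gfun P A w = (if (\<forall>i\<in>A. w $ i = 0) then 0 else
     (let W = (\<lambda>a. (\<Sum>j\<in>A. w $ j * P j a) / (\<Sum>j\<in>A. w $ j))
      in \<Sum>i\<in>A. w $ i * KL (P i) W))"

definition gfun :: "('k::finite \<Rightarrow> 'a::finite \<Rightarrow> real) \<Rightarrow> 'k set set \<Rightarrow> real ^ 'k \<Rightarrow> real" where
  "gfun P \<sigma> w = (\<Sum>A\<in>\<sigma>. Gfun P A w)"

definition curvature :: "(real ^ 'k::finite \<Rightarrow> real) \<Rightarrow> (real ^ 'k) set \<Rightarrow> ereal" where
  "curvature f S = (SUP (x, z, \<alpha>) \<in> {(x, z, \<alpha>). x \<in> S \<and> z \<in> S \<and> 0 < \<alpha> \<and> \<alpha> \<le> (1::real)}.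
      (let y = x + \<alpha> *\<^sub>R (z - x) in
        ereal ((f x - f y + frechet_derivative f (at x) (y - x)) / \<alpha>\<^sup>2)))"

definition p_min :: "('k::finite \<Rightarrow> 'a::finite \<Rightarrow> real) \<Rightarrow> real" where
  "p_min P = Min {P i a | i a. True}"

definition D_const :: "'k set set set \<Rightarrow> ('k::finite \<Rightarrow> 'a::finite \<Rightarrow> real) \<Rightarrow> real" where
  "D_const C P = real (Max {card A | A \<sigma>''. \<sigma>'' \<in> C \<and> A \<in> \<sigma>''}) *
      (real CARD('a) * (1 - p_min P) / (4 * p_min P))"

end

theory Submission
  imports Defs
begin


definition Lf :: "('k::finite \<Rightarrow> 'a::finite \<Rightarrow> real) \<Rightarrow> 'k set \<Rightarrow> 'a \<Rightarrow> real^'k \<Rightarrow> real" where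
  "Lf P A a w = (\<Sum>j\<in>A. w$j * P j a)"
definition Sf :: "'k set \<Rightarrow> real^'k::finite \<Rightarrow> real" where
  "Sf A w = (\<Sum>j\<in>A. w$j)"
definition cst :: "('k::finite \<Rightarrow> 'a::finite \<Rightarrow> real) \<Rightarrow> 'k \<Rightarrow> real" where
  "cst P i = (\<Sum>a\<in>UNIV. P i a * ln (P i a))"
definition FA :: "('k::finite \<Rightarrow> 'a::finite \<Rightarrow> real) \<Rightarrow> 'k set \<Rightarrow> real^'k \<Rightarrow> real" where
  "FA P A w = (\<Sum>i\<in>A. w$i * cst P i) - (\<Sum>a\<in>UNIV. Lf P A a w * ln (Lf P A a w)) + Sf A w * ln (Sf A w)"
definition FA' :: "('k::finite \<Rightarrow> 'a::finite \<Rightarrow> real) \<Rightarrow> 'k set \<Rightarrow> real^'k \<Rightarrow> real^'k \<Rightarrow> real" where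
  "FA' P A x h = (\<Sum>i\<in>A. h$i * cst P i) - (\<Sum>a\<in>UNIV. (ln (Lf P A a x) + 1) * Lf P A a h) + (ln (Sf A x) + 1) * Sf A h"

lemma Lf_pos:
  assumes pos: "\<forall>j a. 0 < P j a" and "A \<noteq> {}" and wpos: "\<forall>j\<in>A. 0 < w$j"
  shows "0 < Lf P A a w"
  unfolding Lf_def using assms by (intro sum_pos) auto

lemma Sf_pos:
  assumes "A \<noteq> {}" and wpos: "\<forall>j\<in>A. 0 < w$j"
  shows "0 < Sf A w"
  unfolding Sf_def using assms by (intro sum_pos) auto

lemma sum_Lf:
  assumes sum1: "\<forall>j. (\<Sum>a\<in>UNIV. P j a) = 1"
  shows "(\<Sum>a\<in>UNIV. Lf P A a w) = Sf A w"
  unfolding Lf_def Sf_def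
  by (subst sum.swap) (simp add: sum_distrib_left[symmetric] sum1)

lemma Gfun_eq:
  assumes pos: "\<forall>j a. 0 < P j a" and sum1: "\<forall>j. (\<Sum>a\<in>UNIV. P j a) = 1"
    and ne: "A \<noteq> {}" and wpos: "\<forall>j\<in>A. 0 < w$j"
  shows "Gfun P A w = FA P A w"
proof -
  have nz: "\<not> (\<forall>i\<in>A. w $ i = 0)" using ne wpos by force
  define S where "S = Sf A w"
  define L where "L = (\<lambda>a. Lf P A a w)"
  have S: "0 < S" unfolding S_def using Sf_pos ne wpos by blast
  have L: "\<And>a. 0 < L a" unfolding L_def using Lf_pos pos ne wpos by blast
  have W: "(\<lambda>a. (\<Sum>j\<in>A. w $ j * P j a) / (\<Sum>j\<in>A. w $ j)) = (\<lambda>a. L a / S)"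
    unfolding L_def S_def Lf_def Sf_def by simp
  have KLi: "KL (P i) (\<lambda>a. L a / S) = cst P i - (\<Sum>a\<in>UNIV. P i a * ln (L a)) + ln S" for i
  proof -
    have "KL (P i) (\<lambda>a. L a / S) = (\<Sum>a\<in>UNIV. P i a * ln (P i a) - P i a * ln (L a) + P i a * ln S)"
      unfolding KL_def
    proof (intro sum.cong refl)
      fix a
      have p: "0 < P i a" using pos by auto
      have h: "ln (P i a / (L a / S)) = ln (P i a) - ln (L a) + ln S"
        using p L[of a] S by (simp add: ln_div ln_mult)
      have "(if P i a = 0 then 0 else P i a * ln (P i a / (L a / S))) = P i a * ln (P i a / (L a / S))"
        using p by simp
      also have "\<dots> = P i a * (ln (P i a) - ln (L a) + ln S)" by (simp only: h)
      also have "\<dots> = P i a * ln (P i a) - P i a * ln (L a) + P i a * ln S" by (simp only: ring_distribs)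
      finally show "(if P i a = 0 then 0 else P i a * ln (P i a / (L a / S))) =
          P i a * ln (P i a) - P i a * ln (L a) + P i a * ln S" .
    qed
    also have "\<dots> = cst P i - (\<Sum>a\<in>UNIV. P i a * ln (L a)) + ln S"
      by (simp add: sum.distrib sum_subtractf cst_def sum_distrib_right[symmetric] sum1)
    finally show ?thesis .
  qed
  have "Gfun P A w = (\<Sum>i\<in>A. w$i * KL (P i) (\<lambda>a. L a / S))"
    unfolding Gfun_def using nz W by simp
  also have "\<dots> = (\<Sum>i\<in>A. w$i * cst P i - (\<Sum>a\<in>UNIV. w$i * P i a * ln (L a)) + w$i * ln S)"
    by (intro sum.cong) (auto simp: KLi algebra_simps sum_distrib_left)
  also have "\<dots> = (\<Sum>i\<in>A. w$i * cst P i) - (\<Sum>i\<in>A. \<Sum>a\<in>UNIV. w$i * P i a * ln (L a)) + (\<Sum>i\<in>A. w$i) * ln S"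
    by (simp add: sum.distrib sum_subtractf sum_distrib_right)
  also have "(\<Sum>i\<in>A. \<Sum>a\<in>UNIV. w$i * P i a * ln (L a)) = (\<Sum>a\<in>UNIV. L a * ln (L a))"
    by (subst sum.swap) (simp add: L_def Lf_def sum_distrib_right)
  also have "(\<Sum>i\<in>A. w$i) = S" by (simp add: S_def Sf_def)
  finally show ?thesis unfolding FA_def L_def S_def .
qed

lemma bl_Lf: "bounded_linear (Lf P A a)"
  unfolding Lf_def by (intro bounded_linear_sum bounded_linear_mult_const bounded_linear_vec_nth)

lemma bl_Sf: "bounded_linear (Sf A)"
  unfolding Sf_def by (intro bounded_linear_sum bounded_linear_vec_nth)

lemma FA_deriv:
  assumes pos: "\<forall>j a. 0 < P j a" and ne: "A \<noteq> {}" and xpos: "\<forall>j\<in>A. 0 < x$j"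
  shows "(FA P A has_derivative FA' P A x) (at x)"
proof -
  have dL: "(Lf P A a has_derivative Lf P A a) (at x)" for a
    by (rule bounded_linear_imp_has_derivative[OF bl_Lf])
  have dS: "(Sf A has_derivative Sf A) (at x)"
    by (rule bounded_linear_imp_has_derivative[OF bl_Sf])
  have dc: "((\<lambda>w. \<Sum>i\<in>A. w$i * cst P i) has_derivative (\<lambda>h. \<Sum>i\<in>A. h$i * cst P i)) (at x)"
    by (intro bounded_linear_imp_has_derivative bounded_linear_sum bounded_linear_mult_const bounded_linear_vec_nth)
  have Lp: "0 < Lf P A a x" for a using Lf_pos[OF pos ne xpos] .
  have Sp: "0 < Sf A x" using Sf_pos[OF ne xpos] .
  have dLl: "((\<lambda>w. Lf P A a w * ln (Lf P A a w)) has_derivative (\<lambda>h. (ln (Lf P A a x) + 1) * Lf P A a h)) (at x)" for a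
    apply (rule has_derivative_eq_rhs)
     apply (rule has_derivative_mult[OF dL has_derivative_ln[OF Lp dL]])
    using Lp[of a] by (simp add: fun_eq_iff field_simps)
  have dSl: "((\<lambda>w. Sf A w * ln (Sf A w)) has_derivative (\<lambda>h. (ln (Sf A x) + 1) * Sf A h)) (at x)"
    apply (rule has_derivative_eq_rhs)
     apply (rule has_derivative_mult[OF dS has_derivative_ln[OF Sp dS]])
    using Sp by (simp add: fun_eq_iff field_simps)
  show ?thesis
    unfolding FA_def[abs_def] FA'_def[abs_def]
    by (intro has_derivative_add has_derivative_diff dc dSl has_derivative_sum dLl)
qed

lemma Lf_add: "Lf P A a (x + c *\<^sub>R d) = Lf P A a x + c * Lf P A a d"
  unfolding Lf_def by (simp add: sum.distrib sum_distrib_left algebra_simps)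
lemma Sf_add: "Sf A (x + c *\<^sub>R d) = Sf A x + c * Sf A d"
  unfolding Sf_def by (simp add: sum.distrib sum_distrib_left algebra_simps)
lemma Lf_diff: "Lf P A a (y - x) = Lf P A a y - Lf P A a x"
  unfolding Lf_def by (simp add: sum_subtractf algebra_simps)
lemma Sf_diff: "Sf A (y - x) = Sf A y - Sf A x"
  unfolding Sf_def by (simp add: sum_subtractf algebra_simps)

lemma gap_eq:
  assumes sum1: "\<forall>j. (\<Sum>a\<in>UNIV. P j a) = 1"
  shows "FA P A x - FA P A y + FA' P A x (y - x) =
    (\<Sum>a\<in>UNIV. Lf P A a y * (ln (Lf P A a y) - ln (Lf P A a x))) - Sf A y * (ln (Sf A y) - ln (Sf A x))"
proof -
  have lin: "(\<Sum>i\<in>A. x$i * cst P i) - (\<Sum>i\<in>A. y$i * cst P i) + (\<Sum>i\<in>A. (y - x)$i * cst P i) = 0"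
  proof -
    have "(\<Sum>i\<in>A. (y - x)$i * cst P i) = (\<Sum>i\<in>A. y$i * cst P i) - (\<Sum>i\<in>A. x$i * cst P i)"
      by (simp add: left_diff_distrib sum_subtractf)
    then show ?thesis by linarith
  qed
  have s1: "(\<Sum>a\<in>UNIV. (ln (Lf P A a x) + 1) * Lf P A a (y - x)) =
      (\<Sum>a\<in>UNIV. ln (Lf P A a x) * (Lf P A a y - Lf P A a x)) + (Sf A y - Sf A x)"
    using sum_Lf[OF sum1, of A y] sum_Lf[OF sum1, of A x]
    by (simp add: Lf_diff algebra_simps sum.distrib sum_subtractf)
  show ?thesis
    unfolding FA_def FA'_def s1 Sf_diff
    using lin
    by (simp add: algebra_simps sum_subtractf sum.distrib)
qed

lemma CS_weighted:
  fixes y d :: "real^'k::finite" and q :: "'k \<Rightarrow> real"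
  assumes ypos: "\<forall>j\<in>A. 0 < y$j"
  shows "(\<Sum>j\<in>A. d$j * q j)\<^sup>2 \<le> (\<Sum>j\<in>A. (d$j)\<^sup>2 / y$j) * (\<Sum>j\<in>A. y$j * (q j)\<^sup>2)"
proof -
  have "(\<Sum>j\<in>A. d$j * q j) = (\<Sum>j\<in>A. (d$j / sqrt (y$j)) * (sqrt (y$j) * q j))"
    using ypos by (intro sum.cong refl) (auto simp: field_simps)
  moreover have "(\<Sum>j\<in>A. (d$j / sqrt (y$j))\<^sup>2) = (\<Sum>j\<in>A. (d$j)\<^sup>2 / y$j)"
    using ypos by (intro sum.cong refl) (auto simp: power_divide)
  moreover have "(\<Sum>j\<in>A. (sqrt (y$j) * q j)\<^sup>2) = (\<Sum>j\<in>A. y$j * (q j)\<^sup>2)"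
    using ypos by (intro sum.cong refl) (auto simp: power_mult_distrib)
  ultimately show ?thesis
    using Cauchy_Schwarz_ineq_sum[of "\<lambda>j. d$j / sqrt (y$j)" "\<lambda>j. sqrt (y$j) * q j" A] by simp
qed

lemma gap_bound:
  assumes pos: "\<forall>j a. 0 < P j a" and sum1: "\<forall>j. (\<Sum>a\<in>UNIV. P j a) = 1"
    and pp: "0 < p" and lo: "\<forall>j a. p \<le> P j a" and hi: "\<forall>j a. P j a \<le> 1 - p"
    and ne: "A \<noteq> {}" and xpos: "\<forall>j\<in>A. 0 < x$j" and ypos: "\<forall>j\<in>A. 0 < y$j"
    and yeq: "y = x + \<alpha> *\<^sub>R d"
  shows "FA P A x - FA P A y + FA' P A x (y - x) \<le> \<alpha>\<^sup>2 * ((1-p)/p) * (\<Sum>j\<in>A. (d$j)\<^sup>2 / y$j)"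
proof -
  define Lx where "Lx a = Lf P A a x" for a
  define Ly where "Ly a = Lf P A a y" for a
  define u where "u a = Lf P A a d" for a
  define Sx where "Sx = Sf A x"
  define Sy where "Sy = Sf A y"
  define s where "s = Sf A d"
  define Q where "Q = (\<Sum>j\<in>A. (d$j)\<^sup>2 / y$j)"
  define U where "U = (\<Sum>a\<in>UNIV. (u a)\<^sup>2 / Lx a)"
  have Lxp: "0 < Lx a" for a unfolding Lx_def using Lf_pos[OF pos ne xpos] .
  have Lyp: "0 < Ly a" for a unfolding Ly_def using Lf_pos[OF pos ne ypos] .
  have Sxp: "0 < Sx" unfolding Sx_def using Sf_pos[OF ne xpos] .
  have Syp: "0 < Sy" unfolding Sy_def using Sf_pos[OF ne ypos] .
  have Lyeq: "Ly a = Lx a + \<alpha> * u a" for a unfolding Ly_def Lx_def u_def yeq Lf_add ..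
  have Syeq: "Sy = Sx + \<alpha> * s" unfolding Sy_def Sx_def s_def yeq Sf_add ..
  have sLx: "(\<Sum>a\<in>UNIV. Lx a) = Sx" unfolding Lx_def Sx_def using sum_Lf[OF sum1] .
  have sLy: "(\<Sum>a\<in>UNIV. Ly a) = Sy" unfolding Ly_def Sy_def using sum_Lf[OF sum1] .
  have su: "(\<Sum>a\<in>UNIV. u a) = s" unfolding u_def s_def using sum_Lf[OF sum1] .
  have p1: "0 \<le> 1 - p" using hi pos by (meson less_imp_le order_trans)
  have Qnn: "0 \<le> Q" unfolding Q_def using ypos by (intro sum_nonneg) auto
  have step1: "FA P A x - FA P A y + FA' P A x (y - x) =
      (\<Sum>a\<in>UNIV. Ly a * (ln (Ly a) - ln (Lx a))) - Sy * (ln Sy - ln Sx)"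
    unfolding Ly_def Lx_def Sy_def Sx_def by (rule gap_eq[OF sum1])
  have step2: "\<dots> = (\<Sum>a\<in>UNIV. Ly a * ln (Ly a * Sx / (Lx a * Sy)))"
  proof -
    have "(\<Sum>a\<in>UNIV. Ly a * ln (Ly a * Sx / (Lx a * Sy))) =
        (\<Sum>a\<in>UNIV. Ly a * (ln (Ly a) - ln (Lx a)) - Ly a * (ln Sy - ln Sx))"
    proof (intro sum.cong refl)
      fix a
      have h: "ln (Ly a * Sx / (Lx a * Sy)) = ln (Ly a) + ln Sx - (ln (Lx a) + ln Sy)"
        using Lxp[of a] Lyp[of a] Sxp Syp by (simp add: ln_div ln_mult)
      then show "Ly a * ln (Ly a * Sx / (Lx a * Sy)) = Ly a * (ln (Ly a) - ln (Lx a)) - Ly a * (ln Sy - ln Sx)"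
        unfolding h by (simp add: algebra_simps)
    qed
    also have "\<dots> = (\<Sum>a\<in>UNIV. Ly a * (ln (Ly a) - ln (Lx a))) - Sy * (ln Sy - ln Sx)"
      by (simp add: sum_subtractf sum_distrib_right[symmetric] sLy)
    finally show ?thesis by simp
  qed
  have step3: "\<dots> \<le> (\<Sum>a\<in>UNIV. Ly a * (Ly a * Sx / (Lx a * Sy) - 1))"
    using Lxp Lyp Sxp Syp
    by (intro sum_mono mult_left_mono ln_le_minus_one) (auto intro!: divide_pos_pos less_imp_le)
  have step4: "(\<Sum>a\<in>UNIV. Ly a * (Ly a * Sx / (Lx a * Sy) - 1)) = \<alpha>\<^sup>2 * (Sx * U - s\<^sup>2) / Sy"
  proof -
    have "(\<Sum>a\<in>UNIV. Ly a * (Ly a * Sx / (Lx a * Sy) - 1)) =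
        (Sx / Sy) * (\<Sum>a\<in>UNIV. (Ly a)\<^sup>2 / Lx a) - Sy"
      using Lxp Syp by (simp add: sum_subtractf sum_distrib_left sLy power2_eq_square field_simps)
    also have "(\<Sum>a\<in>UNIV. (Ly a)\<^sup>2 / Lx a) = (\<Sum>a\<in>UNIV. Lx a + 2 * \<alpha> * u a + \<alpha>\<^sup>2 * ((u a)\<^sup>2 / Lx a))"
    proof (intro sum.cong refl)
      fix a
      have "Lx a \<noteq> 0" using Lxp[of a] by simp
      then show "(Ly a)\<^sup>2 / Lx a = Lx a + 2 * \<alpha> * u a + \<alpha>\<^sup>2 * ((u a)\<^sup>2 / Lx a)"
        by (simp add: Lyeq power2_eq_square field_simps)
    qed
    also have "\<dots> = Sx + 2 * \<alpha> * s + \<alpha>\<^sup>2 * U"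
      by (simp add: sum.distrib sum_distrib_left[symmetric] sLx su U_def times_divide_eq_right[symmetric] del: times_divide_eq_right)
    finally show ?thesis
      using Syp Sxp unfolding Syeq by (simp add: field_simps power2_eq_square)
  qed
  have step5: "Sx * U \<le> Sy * ((1-p)/p) * Q"
  proof -
    have per: "Sx * ((u a)\<^sup>2 / Lx a) \<le> Q * ((1-p)/p) * Ly a" for a
    proof -
      have cs: "(u a)\<^sup>2 \<le> Q * (\<Sum>j\<in>A. y$j * (P j a)\<^sup>2)"
        unfolding u_def Lf_def Q_def by (rule CS_weighted[OF ypos])
      have w2: "(\<Sum>j\<in>A. y$j * (P j a)\<^sup>2) \<le> (1-p) * Ly a"
        unfolding Ly_def Lf_def sum_distrib_left
        using ypos pos hi
        by (intro sum_mono) (auto simp: power2_eq_square intro!: mult_left_mono mult_right_mono less_imp_le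
            simp flip: mult.assoc)
      have lx: "p * Sx \<le> Lx a"
        unfolding Lx_def Lf_def Sx_def Sf_def sum_distrib_left
        using xpos lo by (intro sum_mono) (auto simp: mult.commute intro!: mult_left_mono less_imp_le)
      have r: "Sx / Lx a \<le> 1 / p"
        using lx pp Lxp[of a] by (simp add: field_simps)
      have "Sx * ((u a)\<^sup>2 / Lx a) = (u a)\<^sup>2 * (Sx / Lx a)" by simp
      also have "\<dots> \<le> (Q * ((1-p) * Ly a)) * (1 / p)"
        apply (rule mult_mono[OF order_trans[OF cs mult_left_mono[OF w2 Qnn]] r])
        using Qnn p1 pp Lyp[of a] Sxp Lxp[of a] by (auto intro!: mult_nonneg_nonneg)
      finally show ?thesis by simp
    qed
    have "Sx * U = (\<Sum>a\<in>UNIV. Sx * ((u a)\<^sup>2 / Lx a))" by (simp add: U_def sum_distrib_left)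
    also have "\<dots> \<le> (\<Sum>a\<in>UNIV. Q * ((1-p)/p) * Ly a)" by (intro sum_mono per)
    also have "\<dots> = Q * ((1-p)/p) * (\<Sum>a\<in>UNIV. Ly a)" by (rule sum_distrib_left[symmetric])
    also have "\<dots> = Sy * ((1-p)/p) * Q" by (simp add: sLy)
    finally show ?thesis .
  qed
  have "\<alpha>\<^sup>2 * (Sx * U - s\<^sup>2) / Sy \<le> \<alpha>\<^sup>2 * (Sx * U) / Sy"
    using Syp by (intro divide_right_mono mult_left_mono) auto
  also have "\<dots> \<le> \<alpha>\<^sup>2 * (Sy * ((1-p)/p) * Q) / Sy"
    using Syp step5 by (intro divide_right_mono mult_left_mono) auto
  also have "\<dots> = \<alpha>\<^sup>2 * ((1-p)/p) * Q" using Syp by simp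
  finally show ?thesis
    using step1 step2 step3 step4 unfolding Q_def by linarith
qed



lemma frac_bound:
  fixes g a :: real assumes "0 < g" "0 \<le> a" "a \<le> 1"
  shows "1/(g+a) + 1/(g+1-a) \<le> 1/g + 1/(1+g)"
proof -
  have k: "g*(g+1) \<le> (g+a)*(g+1-a)"
  proof -
    have "(g+a)*(g+1-a) = g*(g+1) + a*(1-a)" by (simp add: algebra_simps)
    moreover have "0 \<le> a*(1-a)" using assms by simp
    ultimately show ?thesis by linarith
  qed
  have p1: "0 < g + a" "0 < g + 1 - a" using assms by auto
  have "1/(g+a) + 1/(g+1-a) = (2*g+1) / ((g+a)*(g+1-a))"
    using p1 by (simp add: field_simps)
  also have "\<dots> \<le> (2*g+1) / (g*(g+1))"
    using p1 assms k by (intro divide_left_mono) auto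
  also have "\<dots> = 1/g + 1/(1+g)" using assms by (simp add: field_simps)
  finally show ?thesis .
qed

lemma K_bound:
  fixes g K :: real assumes "0 < g" "2 \<le> K" "K * g \<le> 1"
  shows "(1 - K*g) * (1/g + 1/(1+g)) \<le> 1/g"
proof -
  have "(1 - K*g) * (1/g + 1/(1+g)) = (1 - K*g) * (1 + 2*g) / (g*(1+g))"
    using assms by (simp add: field_simps)
  also have "\<dots> \<le> (1+g) / (g*(1+g))"
  proof (intro divide_right_mono)
    have "(1 - K*g) * (1 + 2*g) = 1 + g + g*(1-K) - 2*K*g*g" by (simp add: algebra_simps)
    moreover have "g*(1-K) \<le> 0" using assms by (simp add: mult_nonneg_nonpos)
    moreover have "0 \<le> K*g*g" using assms by simp
    ultimately show "(1 - K*g) * (1 + 2*g) \<le> 1 + g" by linarith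
  qed (use assms in auto)
  also have "\<dots> = 1/g" using assms by simp
  finally show ?thesis .
qed

lemma term_bound:
  fixes g a xj zj :: real
  assumes g: "0 < g" and a: "0 < a" "a \<le> 1" and x: "g \<le> xj" "xj \<le> 1" and z: "g \<le> zj" "zj \<le> 1"
  shows "(zj - xj)\<^sup>2 / (xj + a * (zj - xj)) \<le> max (zj - xj) 0 / (g + a) + max (xj - zj) 0 / (g + 1 - a)"
proof (cases "xj \<le> zj")
  case True
  define d where "d = zj - xj"
  have d: "0 \<le> d" "d \<le> 1" using True x z g unfolding d_def by auto
  have y: "g + a * d \<le> xj + a * d" using x by simp
  have p: "0 < g + a * d" using g a d by (simp add: add_pos_nonneg)
  have "d\<^sup>2 / (xj + a * d) \<le> d\<^sup>2 / (g + a * d)"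
    using p y by (intro divide_left_mono) auto
  also have "\<dots> \<le> d / (g + a)"
  proof -
    have "d\<^sup>2 * (g + a) \<le> d * (g + a * d)"
    proof -
      have "d * (g + a) - (g + a*d) = (d - 1) * g" by (simp add: algebra_simps)
      moreover have "(d - 1) * g \<le> 0" using d g by (simp add: mult_nonpos_nonneg)
      ultimately have "d * (g + a) \<le> g + a*d" by linarith
      then have "d * (d * (g + a)) \<le> d * (g + a*d)" using d by (intro mult_left_mono) auto
      then show ?thesis by (simp add: power2_eq_square mult.assoc)
    qed
    then show ?thesis using p g a by (simp add: field_simps)
  qed
  finally show ?thesis using True unfolding d_def by (simp add: max_def)
next
  case False
  define e where "e = xj - zj"
  have e: "0 < e" "e \<le> 1" using False x z g unfolding e_def by auto
  have eq: "xj + a * (zj - xj) = zj + (1 - a) * e" unfolding e_def by (simp add: algebra_simps)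
  have y: "g + (1 - a) * e \<le> zj + (1 - a) * e" using z by simp
  have p: "0 < g + (1 - a) * e" using g a e by (simp add: add_pos_nonneg)
  have "e\<^sup>2 / (zj + (1 - a) * e) \<le> e\<^sup>2 / (g + (1 - a) * e)"
    using p y by (intro divide_left_mono) auto
  also have "\<dots> \<le> e / (g + 1 - a)"
  proof -
    have "e\<^sup>2 * (g + 1 - a) \<le> e * (g + (1 - a) * e)"
    proof -
      have "e * (g + 1 - a) - (g + (1 - a) * e) = (e - 1) * g" by (simp add: algebra_simps)
      moreover have "(e - 1) * g \<le> 0" using e g by (simp add: mult_nonpos_nonneg)
      ultimately have "e * (g + 1 - a) \<le> g + (1 - a) * e" by linarith
      then have "e * (e * (g + 1 - a)) \<le> e * (g + (1 - a) * e)" using e by (intro mult_left_mono) auto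
      then show ?thesis by (simp add: power2_eq_square mult.assoc)
    qed
    moreover have "0 < g + 1 - a" using g a by simp
    ultimately show ?thesis using p by (simp add: field_simps)
  qed
  finally show ?thesis using False eq unfolding e_def by (simp add: max_def power2_commute)
qed

lemma simplex_comp:
  assumes "x \<in> simplex_gamma \<gamma>" "0 < \<gamma>"
  shows "\<gamma> \<le> x$j" "x$j \<le> 1" "(\<Sum>j\<in>UNIV. x$j) = 1"
proof -
  show g: "\<gamma> \<le> x$j" "(\<Sum>j\<in>UNIV. x$j) = 1" using assms by (auto simp: simplex_gamma_def)
  have "\<forall>i\<in>UNIV. 0 \<le> x$i" using assms by (auto simp: simplex_gamma_def intro: order_trans[OF less_imp_le])
  then have "x$j \<le> (\<Sum>j\<in>UNIV. x$j)" by (intro member_le_sum) auto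
  then show "x$j \<le> 1" using g by simp
qed

lemma sumsq_bound:
  fixes x z :: "real^'k::finite"
  assumes xs: "x \<in> simplex_gamma \<gamma>" and zs: "z \<in> simplex_gamma \<gamma>" and g: "0 < \<gamma>"
    and a: "0 < \<alpha>" "\<alpha> \<le> 1" and K: "CARD('k) \<ge> 2"
  shows "(\<Sum>j\<in>UNIV. ((z - x)$j)\<^sup>2 / ((x + \<alpha> *\<^sub>R (z - x))$j)) \<le> 1/\<gamma>"
proof -
  note xc = simplex_comp[OF xs g] and zc = simplex_comp[OF zs g]
  define Pp where "Pp = (\<Sum>j\<in>UNIV. max (z$j - x$j) 0)"
  define Nn where "Nn = (\<Sum>j\<in>UNIV. max (x$j - z$j) 0)"
  have Kg: "real CARD('k) * \<gamma> \<le> 1"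
  proof -
    have "(\<Sum>j\<in>(UNIV::'k set). \<gamma>) \<le> (\<Sum>j\<in>UNIV. x$j)" by (intro sum_mono xc(1))
    then show ?thesis using xc(3) by simp
  qed
  have PN: "Pp = Nn"
  proof -
    have "Pp - Nn = (\<Sum>j\<in>UNIV. z$j - x$j)"
      unfolding Pp_def Nn_def sum_subtractf[symmetric] by (intro sum.cong refl) (simp add: max_def)
    also have "\<dots> = 0" using xc(3) zc(3) by (simp add: sum_subtractf)
    finally show ?thesis by simp
  qed
  have Pnn: "0 \<le> Pp" unfolding Pp_def by (intro sum_nonneg) auto
  have Pb: "Pp \<le> 1 - real CARD('k) * \<gamma>"
  proof -
    have "Pp \<le> (\<Sum>j\<in>UNIV. z$j - \<gamma>)"
      unfolding Pp_def using xc(1) zc(1) by (intro sum_mono) auto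
    also have "\<dots> = 1 - real CARD('k) * \<gamma>" using zc(3) by (simp add: sum_subtractf)
    finally show ?thesis .
  qed
  have "(\<Sum>j\<in>UNIV. ((z - x)$j)\<^sup>2 / ((x + \<alpha> *\<^sub>R (z - x))$j)) \<le>
      (\<Sum>j\<in>UNIV. max (z$j - x$j) 0 / (\<gamma> + \<alpha>) + max (x$j - z$j) 0 / (\<gamma> + 1 - \<alpha>))"
    using term_bound[OF g a xc(1) xc(2) zc(1) zc(2)] by (intro sum_mono) simp
  also have "\<dots> = Pp * (1/(\<gamma>+\<alpha>) + 1/(\<gamma>+1-\<alpha>))"
    unfolding PN by (simp add: Pp_def Nn_def sum.distrib sum_divide_distrib[symmetric] PN[unfolded Pp_def Nn_def] algebra_simps)
  also have "\<dots> \<le> (1 - real CARD('k) * \<gamma>) * (1/\<gamma> + 1/(1+\<gamma>))"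
    using frac_bound[OF g less_imp_le[OF a(1)] a(2)] Pb Pnn g a
    by (intro mult_mono) (auto intro!: add_nonneg_nonneg)
  also have "\<dots> \<le> 1/\<gamma>"
    using K by (intro K_bound[OF g _ Kg]) simp
  finally show ?thesis .
qed



theorem lemma8:
  fixes C :: "'k::finite set set set" and P :: "'k \<Rightarrow> 'a::finite \<Rightarrow> real"
    and \<sigma>' :: "'k set set" and \<gamma> :: real
  assumes "CARD('k) \<ge> 2" and "CARD('a) \<ge> 2"
    and "clustering_problem C" and "assumption1 C TYPE('a)"
    and "in_Lambda_C C P" and "p_min P > 0"
    and "\<sigma>' \<in> C" and "\<sigma>' \<noteq> sigma_of C P"
    and "0 < \<gamma>" and "\<gamma> < 1 / real CARD('k)"
  shows "curvature (gfun P \<sigma>') (simplex_gamma \<gamma>) \<le> ereal (D_const C P / \<gamma>)"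
proof -
  note K = assms(1) and X = assms(2) and g = assms(9)
  define p where "p = p_min P"
  have pp: "0 < p" using assms(6) p_def by simp
  obtain \<sigma>0 where "in_Lambda \<sigma>0 P" using assms(5) unfolding in_Lambda_C_def by blast
  then have distr: "\<forall>i. is_distr (P i)" unfolding in_Lambda_def by simp
  have nn: "\<And>j a. 0 \<le> P j a" and sum1: "\<forall>j. (\<Sum>a\<in>UNIV. P j a) = 1"
    using distr unfolding is_distr_def by auto
  have fin: "finite {P i a |i a. True}"
  proof -
    have "{P i a |i a. True} = (\<lambda>(i,a). P i a) ` UNIV" by auto
    then show ?thesis by simp
  qed
  have lo: "\<forall>j a. p \<le> P j a"
    unfolding p_def p_min_def using fin by (auto intro!: Min_le)
  have pos: "\<forall>j a. 0 < P j a" using lo pp by (meson less_le_trans)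
  have hi: "\<forall>j a. P j a \<le> 1 - p"
  proof (intro allI)
    fix j a
    obtain b :: 'a where b: "b \<noteq> a"
    proof -
      have "\<not> (UNIV :: 'a set) \<subseteq> {a}"
      proof
        assume "(UNIV :: 'a set) \<subseteq> {a}"
        then have "CARD('a) \<le> card {a}" by (intro card_mono) auto
        then show False using X by simp
      qed
      then show ?thesis using that by blast
    qed
    have "P j a + P j b = (\<Sum>c\<in>{a,b}. P j c)" using b by simp
    also have "\<dots> \<le> (\<Sum>c\<in>UNIV. P j c)" by (intro sum_mono2) (auto simp: nn)
    finally show "P j a \<le> 1 - p" using sum1 lo by (metis add_le_cancel_left diff_add_cancel order_trans add.commute le_diff_eq)
  qed
  have p1: "0 \<le> 1 - p" using hi pos by (meson less_imp_le order_trans)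
  have hyp: "is_hypothesis \<sigma>'" using assms(3,7) unfolding clustering_problem_def by blast
  have ne_sig: "\<sigma>' \<noteq> {}" and disj: "\<forall>A\<in>\<sigma>'. \<forall>B\<in>\<sigma>'. A \<noteq> B \<longrightarrow> A \<inter> B = {}"
    and cardA: "\<forall>A\<in>\<sigma>'. card A \<ge> 2"
    using hyp unfolding is_hypothesis_def by auto
  have neA: "A \<noteq> {}" if "A \<in> \<sigma>'" for A using cardA that by fastforce
  define M where "M = Max {card A | A \<sigma>''. \<sigma>'' \<in> C \<and> A \<in> \<sigma>''}"
  have M2: "2 \<le> M"
  proof -
    obtain A0 where A0: "A0 \<in> \<sigma>'" using ne_sig by blast
    have "finite {card A | A \<sigma>''. \<sigma>'' \<in> C \<and> A \<in> \<sigma>''}"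
      by (rule finite_subset[of _ "card ` UNIV"]) auto
    then have "card A0 \<le> M" unfolding M_def using A0 assms(7) by (intro Max_ge) auto
    then show ?thesis using cardA A0 by auto
  qed
  have cD: "(1-p)/p \<le> D_const C P"
  proof -
    have "D_const C P = (real M * real CARD('a) / 4) * ((1-p)/p)"
      unfolding D_const_def M_def p_def by (simp add: field_simps)
    moreover have "1 \<le> real M * real CARD('a) / 4"
    proof -
      have "(2::real) * 2 \<le> real M * real CARD('a)" using M2 X by (intro mult_mono) auto
      then show ?thesis by simp
    qed
    moreover have "0 \<le> (1-p)/p" using p1 pp by simp
    ultimately show ?thesis by (metis mult_le_cancel_right1 order.strict_iff_not)
  qed
  have D0: "0 \<le> D_const C P" using cD p1 pp by (meson divide_nonneg_pos order_trans)
  have deriv: "(gfun P \<sigma>' has_derivative (\<lambda>h. \<Sum>A\<in>\<sigma>'. FA' P A x h)) (at x)"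
    if xs: "x \<in> simplex_gamma \<gamma>" for x
  proof -
    have xpos: "\<forall>j. \<gamma> \<le> x$j" using xs unfolding simplex_gamma_def by auto
    have "(Gfun P A has_derivative FA' P A x) (at x)" if A: "A \<in> \<sigma>'" for A
    proof (rule has_derivative_transform_within[OF FA_deriv[OF pos neA[OF A]] g])
      show "\<forall>j\<in>A. 0 < x $ j" using xpos g by (meson less_le_trans)
      show "x \<in> UNIV" by simp
      fix x' assume "dist x' x < \<gamma>"
      then have "\<forall>j\<in>A. 0 < x' $ j"
      proof (intro ballI)
        fix j assume d: "dist x' x < \<gamma>"
        have "\<bar>(x' - x)$j\<bar> \<le> norm (x' - x)" by (rule component_le_norm_cart)
        then have "\<bar>x'$j - x$j\<bar> < \<gamma>" using d by (simp add: dist_norm)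
        then show "0 < x'$j" using xpos[rule_format, of j] by linarith
      qed
      then show "FA P A x' = Gfun P A x'" using Gfun_eq[OF pos sum1 neA[OF A]] by simp
    qed
    then show ?thesis unfolding gfun_def[abs_def] by (intro has_derivative_sum) auto
  qed
  show ?thesis
    unfolding curvature_def
  proof (intro SUP_least, clarify)
    fix x z :: "real^'k" and \<alpha> :: real
    assume xs: "x \<in> simplex_gamma \<gamma>" and zs: "z \<in> simplex_gamma \<gamma>" and a0: "0 < \<alpha>" and a1: "\<alpha> \<le> 1"
    define d where "d = z - x"
    define y where "y = x + \<alpha> *\<^sub>R d"
    have fd: "frechet_derivative (gfun P \<sigma>') (at x) = (\<lambda>h. \<Sum>A\<in>\<sigma>'. FA' P A x h)"
      using frechet_derivative_at[OF deriv[OF xs]] by simp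
    note xc = simplex_comp[OF xs g] and zc = simplex_comp[OF zs g]
    have xpos: "\<forall>j\<in>A. 0 < x$j" for A using xc(1) g by (meson less_le_trans)
    have ypos: "\<forall>j\<in>A. 0 < y$j" for A
    proof
      fix j
      have "y$j = (1-\<alpha>) * x$j + \<alpha> * z$j" unfolding y_def d_def by (simp add: algebra_simps)
      moreover have "0 \<le> (1-\<alpha>) * x$j" using a1 xc(1)[of j] g by simp
      moreover have "0 < \<alpha> * z$j" using a0 zc(1)[of j] g by simp
      ultimately show "0 < y$j" by linarith
    qed
    define Q where "Q j = (d$j)\<^sup>2 / y$j" for j
    have Qnn: "0 \<le> Q j" for j unfolding Q_def using ypos[of UNIV] by (auto intro!: divide_nonneg_pos)
    have gx: "gfun P \<sigma>' x = (\<Sum>A\<in>\<sigma>'. FA P A x)"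
      unfolding gfun_def using Gfun_eq[OF pos sum1 neA xpos] by (intro sum.cong) auto
    have gy: "gfun P \<sigma>' y = (\<Sum>A\<in>\<sigma>'. FA P A y)"
      unfolding gfun_def using Gfun_eq[OF pos sum1 neA ypos] by (intro sum.cong) auto
    have "gfun P \<sigma>' x - gfun P \<sigma>' y + frechet_derivative (gfun P \<sigma>') (at x) (y - x)
        = (\<Sum>A\<in>\<sigma>'. FA P A x - FA P A y + FA' P A x (y - x))"
      unfolding gx gy fd by (simp add: sum.distrib sum_subtractf)
    also have "\<dots> \<le> (\<Sum>A\<in>\<sigma>'. \<alpha>\<^sup>2 * ((1-p)/p) * (\<Sum>j\<in>A. Q j))"
      unfolding Q_def
      by (intro sum_mono gap_bound[OF pos sum1 pp lo hi neA xpos ypos y_def])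
    also have "\<dots> = \<alpha>\<^sup>2 * ((1-p)/p) * (\<Sum>j\<in>\<Union>\<sigma>'. Q j)"
      using sum.Union_disjoint[of \<sigma>' Q] disj by (simp add: sum_distrib_left o_def)
    also have "\<dots> \<le> \<alpha>\<^sup>2 * ((1-p)/p) * (\<Sum>j\<in>UNIV. Q j)"
      using p1 pp by (intro mult_left_mono sum_mono2) (auto simp: Qnn)
    also have "(\<Sum>j\<in>UNIV. Q j) \<le> 1/\<gamma>"
      unfolding Q_def y_def d_def using sumsq_bound[OF xs zs g a0 a1 K] .
    then have "\<alpha>\<^sup>2 * ((1-p)/p) * (\<Sum>j\<in>UNIV. Q j) \<le> \<alpha>\<^sup>2 * (D_const C P) * (1/\<gamma>)"
      using p1 pp cD Qnn D0 by (intro mult_mono) (auto intro: sum_nonneg)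
    finally have main: "gfun P \<sigma>' x - gfun P \<sigma>' y + frechet_derivative (gfun P \<sigma>') (at x) (y - x)
        \<le> \<alpha>\<^sup>2 * (D_const C P / \<gamma>)" by simp
    have "(gfun P \<sigma>' x - gfun P \<sigma>' y + frechet_derivative (gfun P \<sigma>') (at x) (y - x)) / \<alpha>\<^sup>2
        \<le> D_const C P / \<gamma>"
      using main a0 by (simp add: divide_le_eq mult.commute)
    then show "(let y = x + \<alpha> *\<^sub>R (z - x)
        in ereal ((gfun P \<sigma>' x - gfun P \<sigma>' y + frechet_derivative (gfun P \<sigma>') (at x) (y - x)) / \<alpha>\<^sup>2))
        \<le> ereal (D_const C P / \<gamma>)"
      unfolding Let_def y_def d_def by simp
  qed
qed

end
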